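(* Let $\mathfrak d$ be a delta operator and let $\mathcal Z=(z_i)_{i\ge0}$, $\mathcal Z'=(z'_i)_{i\ge0}$ be grids such that, for a given $k\in\mathbb N$, $z_k\neq z'_k$ and $z_i=z'_i$ for all $i\neq k$. Then $t_n(x;\mathfrak d,\mathcal Z')=t_n(x;\mathfrak d,\mathcal Z)$ for $n\le k$, and for $n>k$, $$t_n(x;\mathfrak d,\mathcal Z')=t_n(x;\mathfrak d,\mathcal Z)-\binom nk\,t_{n-k}(z'_k;\mathfrak d,\mathcal Z^{(k)})\,t_k(x;\mathfrak d,\mathcal Z).$$
   Context: $\mathbb K$ is a field of characteristic zero; a delta operator is a linear operator $\mathfrak d$ on $\mathbb K[x]$ commuting with all shifts $E_a:f(x)\mapsto f(x+a)$ and with $\mathfrak d(x)$ a nonzero constant. $\varepsilon_z$ is evaluation at $z$. A grid is a sequence in $\mathbb K$; $\mathcal Z^{(k)}=(z_{i+k})_{i\ge0}$. $t_n(x;\mathfrak d,\mathcal Z)$ denotes the $n$-th term of the generalized Gončarov basis associated with $(\mathfrak d,\mathcal Z)$, i.e. the unique sequence $(t_n)_{n\ge0}$ with $\deg t_n=n$ and $\varepsilon_{z_i}(\mathfrak d^{\,i}(t_n))=n!\,\delta_{i,n}$ for all $i,n$. *)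

theory Defs
  imports "HOL-Computational_Algebra.Polynomial"
begin

definition shift_op :: "'a::comm_ring_1 \<Rightarrow> 'a poly \<Rightarrow> 'a poly" where
  "shift_op a f = pcompose f [:a, 1:]"

definition delta_operator :: "('a::field poly \<Rightarrow> 'a poly) \<Rightarrow> bool" where
  "delta_operator d \<longleftrightarrow>
     (\<forall>p q. d (p + q) = d p + d q) \<and>
     (\<forall>c p. d (smult c p) = smult c (d p)) \<and>
     (\<forall>a p. d (shift_op a p) = shift_op a (d p)) \<and>
     (\<exists>c. c \<noteq> 0 \<and> d [:0, 1:] = [:c:])"

definition goncarov_basis ::
    "('a::field_char_0 poly \<Rightarrow> 'a poly) \<Rightarrow> (nat \<Rightarrow> 'a) \<Rightarrow> nat \<Rightarrow> 'a poly" where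
  "goncarov_basis d z =
     (THE t. (\<forall>n. degree (t n) = n) \<and>
             (\<forall>i n. poly ((d ^^ i) (t n)) (z i) = (if i = n then fact n else 0)))"

definition grid_shift :: "nat \<Rightarrow> (nat \<Rightarrow> 'a) \<Rightarrow> nat \<Rightarrow> 'a" where
  "grid_shift k z = (\<lambda>i. z (i + k))"

end

theory Submission
  imports Defs
begin


lemma binom_poly_aux: "(\<Sum>k\<le>n. of_nat (n choose k) * x^k * a^(n-k)) = poly (\<Sum>j\<le>n. smult (of_nat (n choose j) * a^(n-j)) (monom 1 j)) (x::'a::field_char_0)"
  unfolding poly_sum poly_smult poly_monom
  by (rule sum.cong) (auto simp: mult_ac)

definition isG :: "('a::field_char_0 poly \<Rightarrow> 'a poly) \<Rightarrow> (nat \<Rightarrow> 'a) \<Rightarrow> nat \<Rightarrow> 'a poly \<Rightarrow> bool" where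
  "isG d z n p \<longleftrightarrow> degree p = n \<and> (\<forall>i. poly ((d ^^ i) p) (z i) = (if i = n then fact n else 0))"

context
  fixes d :: "'a::field_char_0 poly \<Rightarrow> 'a poly"
  assumes D: "delta_operator d"
begin

lemma d_add: "d (p + q) = d p + d q" using D unfolding delta_operator_def by blast
lemma d_smult: "d (smult c p) = smult c (d p)" using D unfolding delta_operator_def by blast
lemma d_shift: "d (shift_op a p) = shift_op a (d p)" using D unfolding delta_operator_def by blast
lemma d_x: obtains c where "c \<noteq> 0" "d [:0, 1:] = [:c:]" using D unfolding delta_operator_def by blast

lemma d_zero: "d 0 = 0"
  using d_add[of 0 0] by simp

lemma d_diff: "d (p - q) = d p - d q"
  using d_add[of "p - q" q] by (simp add: algebra_simps)

lemma d_sum: "d (\<Sum>j\<in>A. f j) = (\<Sum>j\<in>A. d (f j))"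
  by (induction A rule: infinite_finite_induct) (auto simp: d_zero d_add)

lemma d_one: "d [:1:] = 0"
proof -
  obtain c where c: "c \<noteq> 0" "d [:0, 1:] = [:c:]" by (rule d_x)
  have "shift_op 1 [:0,1:] = [:0,1:] + [:1:]"
    by (simp add: shift_op_def pcompose_pCons)
  hence "d (shift_op 1 [:0,1:]) = [:c:] + d [:1:]" using c by (metis d_add)
  moreover have "d (shift_op 1 [:0,1:]) = [:c:]" unfolding d_shift using c by (simp add: shift_op_def)
  ultimately show ?thesis by simp
qed

lemma d_const: "d [:b:] = 0"
  using d_smult[of b "[:1:]"] d_one by simp

lemma d_deg0: "degree p = 0 \<Longrightarrow> d p = 0"
  by (metis degree_eq_zeroE d_const)

lemma shift_monom:
  "shift_op (a::'a) (monom 1 n) = (\<Sum>j\<le>n. smult (of_nat (n choose j) * a^(n-j)) (monom 1 j))"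
proof -
  have "poly (shift_op a (monom 1 n)) x = poly (\<Sum>j\<le>n. smult (of_nat (n choose j) * a^(n-j)) (monom 1 j)) x" for x
  proof -
    have "poly (shift_op a (monom 1 n)) x = (a + x)^n" by (simp add: shift_op_def poly_pcompose poly_monom)
    also have "\<dots> = (x + a)^n" by (simp only: add.commute)
    also have "\<dots> = (\<Sum>k\<le>n. of_nat (n choose k) * x^k * a^(n-k))" by (rule binomial_ring)
    also have "\<dots> = poly (\<Sum>j\<le>n. smult (of_nat (n choose j) * a^(n-j)) (monom 1 j)) x"
      unfolding poly_sum poly_smult poly_monom by (rule sum.cong) (auto simp: mult_ac)
    finally show ?thesis .
  qed
  thus ?thesis using poly_eq_poly_eq_iff by blast
qed

lemma d_monom: assumes "n \<ge> 1" shows "d (monom 1 n) \<noteq> 0 \<and> degree (d (monom 1 n)) = n - 1"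
proof -
  obtain c where c: "c \<noteq> 0" "d [:0, 1:] = [:c:]" by (rule d_x)
  define e where "e j = poly (d (monom 1 j)) 0" for j
  define Q where "Q = (\<Sum>j\<le>n. monom (of_nat (n choose j) * e j) (n-j))"
  have "poly (d (monom 1 n)) a = poly Q a" for a
  proof -
    have "d (shift_op a (monom 1 n)) = (\<Sum>j\<le>n. smult (of_nat (n choose j) * a^(n-j)) (d (monom 1 j)))"
      unfolding shift_monom d_sum d_smult ..
    hence "poly (shift_op a (d (monom 1 n))) 0 = poly (\<Sum>j\<le>n. smult (of_nat (n choose j) * a^(n-j)) (d (monom 1 j))) 0"
      by (simp add: d_shift)
    thus ?thesis by (simp add: shift_op_def poly_pcompose poly_sum Q_def e_def poly_monom mult_ac)
  qed
  hence QE: "d (monom 1 n) = Q" using poly_eq_poly_eq_iff by blast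
  have e0: "e 0 = 0" using d_one by (simp add: e_def one_pCons)
  have e1: "e 1 = c" using c by (simp add: e_def monom_Suc monom_0)
  have cQ: "coeff Q m = (\<Sum>j\<le>n. if n - j = m then of_nat (n choose j) * e j else 0)" for m
    by (simp add: Q_def coeff_sum coeff_monom)
  have hi: "coeff Q m = 0" if "m \<ge> n" for m
    unfolding cQ
  proof (intro sum.neutral ballI)
    fix j assume "j \<in> {..n}"
    show "(if n - j = m then of_nat (n choose j) * e j else 0) = 0"
    proof (cases "j = 0")
      case True thus ?thesis using e0 by simp
    next
      case False thus ?thesis using that assms by auto
    qed
  qed
  have top: "coeff Q (n-1) = of_nat n * c"
  proof -
    have "coeff Q (n-1) = (\<Sum>j\<le>n. if j = 1 then of_nat (n choose j) * e j else 0)"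
      unfolding cQ using assms by (intro sum.cong) auto
    also have "\<dots> = of_nat n * c" using assms e1 by (simp add: sum.delta)
    finally show ?thesis .
  qed
  have nz: "coeff Q (n-1) \<noteq> 0" using top c assms by simp
  have "degree Q \<le> n - 1" by (rule degree_le) (use hi assms in auto)
  moreover have "n - 1 \<le> degree Q" using nz by (rule le_degree)
  ultimately show ?thesis using QE nz by auto
qed

lemma d_degree: "degree (d p) = degree p - 1 \<and> (d p = 0 \<longleftrightarrow> degree p = 0)"
proof (induction "degree p" arbitrary: p rule: less_induct)
  case less
  show ?case
  proof (cases "degree p = 0")
    case True thus ?thesis using d_deg0 by simp
  next
    case False
    define m where "m = degree p"
    define r where "r = p - monom (lead_coeff p) m"
    have p: "p = smult (lead_coeff p) (monom 1 m) + r" by (simp add: r_def smult_monom)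
    have lc: "lead_coeff p \<noteq> 0" using False by auto
    have rdeg: "degree r < m"
    proof (cases "r = 0")
      case True thus ?thesis using False m_def by simp
    next
      case False
      have "degree r \<le> m" unfolding r_def m_def
        by (intro degree_diff_le) (auto intro: order.trans[OF degree_monom_le])
      moreover have "coeff r m = 0" by (simp add: r_def m_def)
      hence "degree r \<noteq> m" using False by auto
      ultimately show ?thesis by simp
    qed
    have dm: "d (monom 1 m) \<noteq> 0" "degree (d (monom 1 m)) = m - 1" using d_monom False m_def by auto
    have dp: "d p = smult (lead_coeff p) (d (monom 1 m)) + d r"
      by (subst p) (simp add: d_add d_smult)
    have t: "degree (smult (lead_coeff p) (d (monom 1 m))) = m - 1"
       "smult (lead_coeff p) (d (monom 1 m)) \<noteq> 0" using dm lc by auto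
    have IH: "degree (d r) = degree r - 1 \<and> (d r = 0 \<longleftrightarrow> degree r = 0)"
      using less.hyps rdeg m_def by blast
    show ?thesis
    proof (cases "degree r = 0")
      case True
      then have "d p = smult (lead_coeff p) (d (monom 1 m))" using IH dp by simp
      thus ?thesis using t False m_def by simp
    next
      case False2: False
      then have "degree (d r) < m - 1" using IH rdeg by simp
      then have "degree (d p) = m - 1" using dp t by (simp add: degree_add_eq_left)
      moreover have "m - 1 \<ge> 1" using False2 rdeg by simp
      ultimately show ?thesis using m_def by auto
    qed
  qed
qed

lemma dpow_Suc: "(d ^^ Suc i) p = d ((d ^^ i) p)" by simp

lemma dpow_degree: "degree ((d ^^ i) p) = degree p - i"
  by (induction i) (simp_all add: d_degree)

lemma dpow_zero_big: "degree p < i \<Longrightarrow> (d ^^ i) p = 0"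
proof (induction i)
  case 0 thus ?case by simp
next
  case (Suc i)
  show ?case
  proof (cases "degree p < i")
    case True thus ?thesis using Suc by (simp add: d_zero)
  next
    case False
    hence "degree ((d ^^ i) p) = 0" using Suc.prems dpow_degree by simp
    thus ?thesis by (simp add: d_deg0)
  qed
qed

lemma dpow_nonzero: "p \<noteq> 0 \<Longrightarrow> i \<le> degree p \<Longrightarrow> (d ^^ i) p \<noteq> 0"
proof (induction i)
  case 0 thus ?case by simp
next
  case (Suc i)
  hence "(d ^^ i) p \<noteq> 0" "degree ((d ^^ i) p) \<noteq> 0" using dpow_degree by auto
  thus ?case using d_degree by simp
qed

lemma dpow_diff: "(d ^^ i) (p - q) = (d ^^ i) p - (d ^^ i) q"
  by (induction i) (simp_all add: d_diff)

lemma dpow_smult: "(d ^^ i) (smult c p) = smult c ((d ^^ i) p)"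
  by (induction i) (simp_all add: d_smult)

lemma dpow_const: "(d ^^ Suc i) [:b:] = 0"
proof (induction i)
  case 0 thus ?case by (simp add: d_const)
next
  case (Suc i) thus ?case by (simp add: d_zero)
qed

lemma d_surj: "\<exists>p. d p = q"
proof (induction "degree q" arbitrary: q rule: less_induct)
  case less
  show ?case
  proof (cases "q = 0")
    case True thus ?thesis using d_zero by blast
  next
    case False
    define m where "m = degree q"
    define b where "b = d (monom 1 (Suc m))"
    have b: "b \<noteq> 0" "degree b = m" using d_monom[of "Suc m"] b_def by auto
    define p1 where "p1 = smult (lead_coeff q / lead_coeff b) (monom 1 (Suc m))"
    define q' where "q' = q - d p1"
    have q': "q' = q - smult (lead_coeff q / lead_coeff b) b" by (simp add: q'_def p1_def d_smult b_def)
    show ?thesis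
    proof (cases "q' = 0")
      case True thus ?thesis unfolding q'_def by auto
    next
      case qnz: False
      have "degree q' \<le> m" unfolding q' using b m_def
        by (intro degree_diff_le) (auto intro: order.trans[OF degree_smult_le])
      moreover have "coeff q' m = 0"
      proof -
        have "coeff b m \<noteq> 0" using b by (metis leading_coeff_0_iff)
        moreover have "lead_coeff b = coeff b m" using b by simp
        ultimately show ?thesis unfolding q' using m_def by simp
      qed
      hence "degree q' \<noteq> m" using qnz by auto
      ultimately have "degree q' < degree q" using m_def by simp
      then obtain p2 where "d p2 = q'" using less.hyps by blast
      hence "d (p1 + p2) = q" by (simp add: d_add q'_def)
      thus ?thesis by blast
    qed
  qed
qed

lemma dpow_0: "(d ^^ i) 0 = 0"
  using dpow_smult[of i 0 0] by simp

lemma uniq: assumes "\<And>i. poly ((d ^^ i) p) (z i) = poly ((d ^^ i) q) (z i)" shows "p = q"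
proof (rule ccontr)
  assume "p \<noteq> q"
  define r where "r = p - q"
  have r: "r \<noteq> 0" using \<open>p \<noteq> q\<close> r_def by simp
  define m where "m = degree r"
  have nz: "(d ^^ m) r \<noteq> 0" using dpow_nonzero r m_def by simp
  have dg: "degree ((d ^^ m) r) = 0" using dpow_degree m_def by simp
  then obtain c where c: "(d ^^ m) r = [:c:]" by (metis degree_eq_zeroE)
  have "poly ((d ^^ m) r) (z m) = 0" using assms[of m] by (simp add: r_def dpow_diff)
  thus False using c nz by simp
qed

lemma exist: "\<exists>p. isG d z n p"
proof (induction n arbitrary: z)
  case 0
  have "isG d z 0 [:1:]" unfolding isG_def
  proof (intro conjI allI)
    fix i show "poly ((d ^^ i) [:1:]) (z i) = (if i = 0 then fact 0 else 0)"
      by (cases i) (simp_all only: dpow_const, simp_all)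
  qed simp
  thus ?case by blast
next
  case (Suc n)
  obtain q where q: "isG d (\<lambda>i. z (Suc i)) n q" using Suc.IH by blast
  have qnz: "q \<noteq> 0"
  proof
    assume "q = 0"
    hence "poly ((d ^^ n) q) (z (Suc n)) = 0" by (simp add: dpow_0)
    thus False using q unfolding isG_def by simp
  qed
  obtain p0 where p0: "d p0 = smult (of_nat (Suc n)) q" using d_surj by blast
  have "d p0 \<noteq> 0" using p0 qnz by (simp del: of_nat_Suc)
  hence dp0: "degree p0 \<noteq> 0" "degree p0 - 1 = n" using d_degree[of p0] p0 q unfolding isG_def by auto
  define p where "p = p0 + [:- poly p0 (z 0):]"
  have degp: "degree p = Suc n" unfolding p_def using dp0
    by (subst degree_add_eq_left) auto
  have dp: "d p = smult (of_nat (Suc n)) q" unfolding p_def by (simp add: d_add d_const p0)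
  have "isG d z (Suc n) p" unfolding isG_def
  proof (intro conjI allI)
    fix i show "poly ((d ^^ i) p) (z i) = (if i = Suc n then fact (Suc n) else 0)"
    proof (cases i)
      case 0 thus ?thesis by (simp add: p_def)
    next
      case (Suc j)
      have "(d ^^ i) p = (d ^^ j) (d p)" using Suc by (simp only: funpow_Suc_right o_apply)
      also have "\<dots> = smult (of_nat (Suc n)) ((d ^^ j) q)" by (simp add: dp dpow_smult)
      finally show ?thesis using q Suc unfolding isG_def by simp
    qed
  qed (rule degp)
  thus ?case by blast
qed

lemma gb_isG: "isG d z n (goncarov_basis d z n)"
proof -
  let ?P = "\<lambda>t. (\<forall>n. degree (t n) = n) \<and>
             (\<forall>i n. poly ((d ^^ i) (t n)) (z i) = (if i = n then fact n else 0))"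
  define t0 where "t0 = (\<lambda>n. SOME p. isG d z n p)"
  have t0: "isG d z n (t0 n)" for n unfolding t0_def using exist by (rule someI_ex)
  have "\<exists>!t. ?P t"
  proof
    show "?P t0" using t0 unfolding isG_def by blast
  next
    fix t assume "?P t"
    show "t = t0"
    proof
      fix n show "t n = t0 n"
        by (rule uniq[of _ z]) (use \<open>?P t\<close> t0 in \<open>auto simp: isG_def\<close>)
    qed
  qed
  hence "?P (goncarov_basis d z)" unfolding goncarov_basis_def by (rule theI')
  thus ?thesis unfolding isG_def by blast
qed

lemma gb_eq: "isG d z n p \<Longrightarrow> goncarov_basis d z n = p"
  using gb_isG[of z n] by (intro uniq[of _ z]) (auto simp: isG_def)

end

lemma key_shift:
  fixes d :: "'a::field_char_0 poly \<Rightarrow> 'a poly"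
  assumes D: "delta_operator d" and nk: "k \<le> n"
  shows "(d ^^ k) (goncarov_basis d z n) = smult (fact n / fact (n - k)) (goncarov_basis d (grid_shift k z) (n - k))"
proof -
  define t where "t = goncarov_basis d z n"
  have tG: "isG d z n t" unfolding t_def by (rule gb_isG[OF D])
  define s :: 'a where "s = fact (n - k) / fact n"
  have s0: "s \<noteq> 0" by (simp add: s_def)
  have "isG d (grid_shift k z) (n - k) (smult s ((d ^^ k) t))" unfolding isG_def
  proof (intro conjI allI)
    show "degree (smult s ((d ^^ k) t)) = n - k" using s0 tG dpow_degree[OF D] by (simp add: isG_def)
  next
    fix i
    have "(d ^^ i) (smult s ((d ^^ k) t)) = smult s ((d ^^ (i + k)) t)"
      by (simp add: dpow_smult[OF D] funpow_add)
    moreover have "poly ((d ^^ (i + k)) t) (z (i + k)) = (if i + k = n then fact n else 0)"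
      using tG by (simp add: isG_def)
    ultimately show "poly ((d ^^ i) (smult s ((d ^^ k) t))) (grid_shift k z i) = (if i = n - k then fact (n - k) else 0)"
      using nk by (auto simp: grid_shift_def s_def)
  qed
  hence "goncarov_basis d (grid_shift k z) (n - k) = smult s ((d ^^ k) t)" by (rule gb_eq[OF D])
  hence "smult (fact n / fact (n - k)) (goncarov_basis d (grid_shift k z) (n - k)) = (d ^^ k) t"
    by (simp add: s_def)
  thus ?thesis by (simp add: t_def)
qed

theorem mainTheorem12:
  fixes d :: "'a::field_char_0 poly \<Rightarrow> 'a poly"
    and z z' :: "nat \<Rightarrow> 'a" and k :: nat
  assumes "delta_operator d"
    and "z k \<noteq> z' k"
    and "\<And>i. i \<noteq> k \<Longrightarrow> z i = z' i"
  shows "(\<forall>n\<le>k. goncarov_basis d z' n = goncarov_basis d z n) \<and>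
         (\<forall>n>k. goncarov_basis d z' n =
                  goncarov_basis d z n
                  - smult (of_nat (n choose k) * poly (goncarov_basis d (grid_shift k z) (n - k)) (z' k))
                          (goncarov_basis d z k))"
proof (intro conjI allI impI)
  note D = assms(1)
  fix n assume nk: "n \<le> k"
  define t where "t = goncarov_basis d z n"
  have tG: "isG d z n t" unfolding t_def by (rule gb_isG[OF D])
  have "isG d z' n t" unfolding isG_def
  proof (intro conjI allI)
    show "degree t = n" using tG by (simp add: isG_def)
  next
    fix i show "poly ((d ^^ i) t) (z' i) = (if i = n then fact n else 0)"
    proof (cases "i = k")
      case False thus ?thesis using tG assms(3)[OF False, symmetric] by (simp add: isG_def)
    next
      case True
      show ?thesis
      proof (cases "n < k")
        case True
        hence "(d ^^ k) t = 0" using tG dpow_zero_big[OF D] by (simp add: isG_def)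
        thus ?thesis using True \<open>i = k\<close> by simp
      next
        case False
        hence nk': "n = k" using nk by simp
        have "degree ((d ^^ k) t) = 0" using tG dpow_degree[OF D] nk' by (simp add: isG_def)
        then obtain c where c: "(d ^^ k) t = [:c:]" by (metis degree_eq_zeroE)
        have "poly ((d ^^ k) t) (z k) = fact n" using tG nk' by (simp add: isG_def)
        thus ?thesis using c \<open>i = k\<close> nk' by simp
      qed
    qed
  qed
  thus "goncarov_basis d z' n = goncarov_basis d z n" unfolding t_def by (rule gb_eq[OF D])
next
  note D = assms(1)
  fix n assume kn: "k < n"
  define t where "t = goncarov_basis d z n"
  define tk where "tk = goncarov_basis d z k"
  define c where "c = of_nat (n choose k) * poly (goncarov_basis d (grid_shift k z) (n - k)) (z' k)"
  have tG: "isG d z n t" unfolding t_def by (rule gb_isG[OF D])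
  have tkG: "isG d z k tk" unfolding tk_def by (rule gb_isG[OF D])
  have "isG d z' n (t - smult c tk)" unfolding isG_def
  proof (intro conjI allI)
    have "degree (smult c tk) < degree t" using tG tkG kn
      by (simp add: isG_def)
    hence "degree (t + - smult c tk) = degree t" by (intro degree_add_eq_left) simp
    thus "degree (t - smult c tk) = n" using tG
      by (simp add: isG_def)
  next
    fix i
    have e: "(d ^^ i) (t - smult c tk) = (d ^^ i) t - smult c ((d ^^ i) tk)"
      by (simp add: dpow_diff[OF D] dpow_smult[OF D])
    show "poly ((d ^^ i) (t - smult c tk)) (z' i) = (if i = n then fact n else 0)"
    proof (cases "i = k")
      case False thus ?thesis using tG tkG assms(3)[OF False, symmetric] e by (simp add: isG_def)
    next
      case True
      have "poly ((d ^^ k) t) (z' k) = fact n / fact (n - k) * poly (goncarov_basis d (grid_shift k z) (n - k)) (z' k)"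
        using key_shift[OF D, of k n z] kn unfolding t_def by simp
      moreover have "poly ((d ^^ k) tk) (z' k) = fact k"
      proof -
        have "degree ((d ^^ k) tk) = 0" using tkG dpow_degree[OF D] by (simp add: isG_def)
        then obtain c where c: "(d ^^ k) tk = [:c:]" by (metis degree_eq_zeroE)
        have "poly ((d ^^ k) tk) (z k) = fact k" using tkG by (simp add: isG_def)
        thus ?thesis using c by simp
      qed
      moreover have fb: "fact k * of_nat (n choose k) = (fact n / fact (n - k) :: 'a)"
        using kn by (simp add: fact_binomial)
      ultimately have "poly ((d ^^ k) t) (z' k) - c * poly ((d ^^ k) tk) (z' k) = 0"
        unfolding c_def by (simp add: algebra_simps) (metis fb mult.assoc times_divide_eq_left)
      moreover have "poly ((d ^^ i) (t - smult c tk)) (z' i) = poly ((d ^^ k) t) (z' k) - c * poly ((d ^^ k) tk) (z' k)"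
        using e True by simp
      ultimately show ?thesis using True kn by simp
    qed
  qed
  thus "goncarov_basis d z' n = goncarov_basis d z n - smult c (goncarov_basis d z k)"
    unfolding t_def tk_def by (rule gb_eq[OF D])
qed

end
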